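(* Fix $N\ge 1$, $L>0$, $\alpha>0$, $p>0$, $\lambda_e>0$ and $\epsilon\in(0,1)$. Let $K_1=\pi\lambda_e\Gamma(\frac{2}{\alpha}+1)$, $K_2=\frac{(L/N)^\alpha+1}{p}$, and $$R_e^{*}=\log_2\!\left[\frac{2p}{\alpha}\,W_0\!\left(\frac{\alpha}{2}\left[\frac{\ln\frac{1}{1-\epsilon}}{NK_1}\right]^{-\alpha/2}\right)+1\right].$$ Then: (i) for rates $R_t\ge R_s>0$, the constraint $\mathcal{P}_{\mathrm{so}}\le\epsilon$ holds if and only if $R_t-R_s\ge R_e^*$ (with equality $\mathcal{P}_{\mathrm{so}}=\epsilon$ iff $R_t-R_s=R_e^*$); (ii) the function $$\mathbb{U}(R_t)=\frac{(R_t-R_e^* )\exp\!\left[-K_2\left(2^{R_t}-1\right)\right]}{N},\qquad R_t>R_e^*,$$ is quasi-concave, and its unique maximizer is $$R_t^{*}=R_e^{*}+\frac{1}{\ln 2}W_0\!\left(\frac{2^{-R_e^{*}}}{K_2}\right);$$ (iii) consequently, the on-off-transmission throughput $\mathbb{U}_{\mathrm{OFT}}=\mathcal{P}'_t R_s/N$ is maximized over all $(R_t,R_s)$ with $R_t\ge R_s>0$ and $\mathcal{P}_{\mathrm{so}}\le\epsilon$ by $R_t=R_t^*$ and $$R_s=R_s^{*}=\frac{1}{\ln 2}W_0\!\left(\frac{2^{-R_e^{*}}}{K_2}\right).$$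
   Context: Setup (linear multihop network). Source and destination are at distance $L$, connected by $N$ equal-length hops of length $L/N$. Fix path-loss exponent $\alpha>0$, transmitter-side SNR $p>0$, eavesdropper density $\lambda_e>0$. Legitimate hop $n$ has received SNR $\mathrm{SNR}_n=\frac{pH_n}{(L/N)^\alpha+1}$ with $H_n$ i.i.d. exponential of mean 1. For each hop $n$, eavesdroppers form independent homogeneous Poisson point processes $\Phi_{ne}$ of intensity $\lambda_e$ on $\mathbb{R}^2$; eavesdropper $e\in\Phi_{ne}$ has SNR $pS_{ne}/(|X_{ne}|^\alpha+1)$, with $|X_{ne}|$ its distance to the hop-$n$ transmitter and $S_{ne}$ i.i.d. Exp(1) independent of everything. Wiretap code rates $R_t\ge R_s>0$, $R_e=R_t-R_s$, $\beta_t=2^{R_t}-1$, $\beta_e=2^{R_e}-1$. The end-to-end secrecy outage probability is $\mathcal{P}_{\mathrm{so}}=\mathbb{P}(\max_n\max_{e\in\Phi_{ne}}\mathrm{SNR}_{ne}>\beta_e)=1-\exp[-NK_1(\beta_e/p)^{-2/\alpha}e^{-\beta_e/p}]$. On-off transmission (OFT): a hop transmits only when $\mathrm{SNR}_n>\beta_t$, so the per-hop transmission probability is $\mathcal{P}'_t=\mathbb{P}(\mathrm{SNR}_n>\beta_t)=\exp[-\beta_t((L/N)^\alpha+1)/p]$, and the secure transmission throughput is $\mathbb{U}_{\mathrm{OFT}}=\mathcal{P}'_tR_s/N$. $W_0$ denotes the principal branch of the Lambert W function. *)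

theory Defs
  imports "HOL-Analysis.Analysis"
begin

text \<open>Principal branch W_0 of the Lambert W function: for x \<ge> -1/e it is the
  unique w \<ge> -1 with w * exp w = x.\<close>
definition lambertW0 :: "real \<Rightarrow> real" where
  "lambertW0 x = (THE w. w \<ge> -1 \<and> w * exp w = x)"

definition quasiconcave_on :: "real set \<Rightarrow> (real \<Rightarrow> real) \<Rightarrow> bool" where
  "quasiconcave_on S f \<longleftrightarrow> convex S \<and>
     (\<forall>x\<in>S. \<forall>y\<in>S. \<forall>t::real. 0 \<le> t \<and> t \<le> 1 \<longrightarrow>
        f (t * x + (1 - t) * y) \<ge> min (f x) (f y))"

text \<open>End-to-end secrecy outage probability (closed form), with
  beta_e = 2^(Rt-Rs) - 1. When beta_e = 0 every eavesdropper exceeds the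
  threshold and the outage probability is 1 (the closed form's limit).\<close>
definition sec_outage :: "nat \<Rightarrow> real \<Rightarrow> real \<Rightarrow> real \<Rightarrow> real \<Rightarrow> real \<Rightarrow> real" where
  "sec_outage N K1 \<alpha> p Rt Rs =
     (let \<beta>e = 2 powr (Rt - Rs) - 1 in
      if \<beta>e \<le> 0 then 1
      else 1 - exp (- (real N * K1 * (\<beta>e / p) powr (-2 / \<alpha>) * exp (- \<beta>e / p))))"

definition oft_tx_prob :: "nat \<Rightarrow> real \<Rightarrow> real \<Rightarrow> real \<Rightarrow> real \<Rightarrow> real" where
  "oft_tx_prob N L \<alpha> p Rt =
     exp (- (2 powr Rt - 1) * ((L / real N) powr \<alpha> + 1) / p)"

definition oft_throughput :: "nat \<Rightarrow> real \<Rightarrow> real \<Rightarrow> real \<Rightarrow> real \<Rightarrow> real \<Rightarrow> real" where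
  "oft_throughput N L \<alpha> p Rt Rs = oft_tx_prob N L \<alpha> p Rt * Rs / real N"

end

theory Submission
  imports Defs
begin


lemma ln_lt_minus_one: fixes s :: real assumes "0 < s" "s \<noteq> 1" shows "ln s < s - 1"
proof -
  have q: "sqrt s > 0" using assms by simp
  have ss: "sqrt s ^ 2 = s" using assms by simp
  have "sqrt s \<noteq> 1" using assms ss by auto
  hence "(sqrt s - 1)^2 > 0" by simp
  hence "2 * (sqrt s - 1) < s - 1" using ss by (simp add: power2_eq_square algebra_simps)
  moreover have "ln s = 2 * ln (sqrt s)" using assms by (simp add: ln_sqrt)
  moreover have "ln (sqrt s) \<le> sqrt s - 1" using q by (rule ln_le_minus_one)
  ultimately show ?thesis by (smt (verit))
qed

lemma two_powr_ge: "1 + x * ln 2 \<le> 2 powr (x::real)"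
proof -
  have "2 powr x = exp (x * ln 2)" by (simp add: powr_def)
  thus ?thesis using exp_ge_add_one_self[of "x * ln 2"] by simp
qed

lemma W0_pos: fixes x :: real assumes "x > 0"
  shows "0 < lambertW0 x \<and> lambertW0 x * exp (lambertW0 x) = x"
proof -
  have "\<exists>w\<ge>0. w \<le> x \<and> w * exp w = x"
  proof (rule IVT)
    show "0 * exp 0 \<le> x" using assms by simp
    have "x * 1 \<le> x * exp x" using assms by (intro mult_left_mono) auto
    thus "x \<le> x * exp x" by simp
    show "0 \<le> x" using assms by simp
    show "\<forall>y. 0 \<le> y \<and> y \<le> x \<longrightarrow> isCont (\<lambda>w. w * exp w) y" by (auto intro!: continuous_intros)
  qed
  then obtain w where w: "w \<ge> 0" "w * exp w = x" by blast
  have pos: "v > 0" if "v * exp v = x" for v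
  proof (rule ccontr)
    assume "\<not> v > 0"
    hence "v * exp v \<le> 0" by (simp add: mult_nonpos_nonneg)
    thus False using that assms by simp
  qed
  have uniq: "v = w" if "v \<ge> -1 \<and> v * exp v = x" for v
  proof (rule ccontr)
    assume ne: "v \<noteq> w"
    have v0: "v > 0" using pos that by blast
    have w0: "w > 0" using pos w by blast
    have mono: "a * exp a < b * exp b" if "0 < a" "a < b" for a b :: real
      using that by (intro mult_strict_mono) auto
    show False
    proof (cases "v < w")
      case True thus False using mono[OF v0 True] that w by simp
    next
      case False hence "w < v" using ne by simp
      thus False using mono[OF w0] that w by force
    qed
  qed
  have "lambertW0 x = w" unfolding lambertW0_def
    by (rule the_equality) (use w uniq in auto)
  thus ?thesis using w pos by auto
qed


lemma incr:
  fixes a k t1 t2 :: real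
  assumes "a < t1" "t1 < t2" "k > 0" "(t2 - a) * k * ln 2 * 2 powr t2 \<le> 1"
  shows "(t1 - a) * exp (- k * (2 powr t1 - 1)) < (t2 - a) * exp (- k * (2 powr t2 - 1))"
proof -
  define e1 e2 where "e1 = 2 powr t1" and "e2 = (2::real) powr t2"
  have e2p: "e2 > 0" unfolding e2_def by simp
  have "e1 = e2 * 2 powr (-(t2 - t1))" unfolding e1_def e2_def by (simp add: powr_add[symmetric])
  moreover have "1 - (t2 - t1) * ln 2 \<le> 2 powr (-(t2 - t1))" using two_powr_ge[of "t1-t2"] by (simp add: algebra_simps)
  ultimately have A: "1 - 2 powr (-(t2 - t1)) \<le> (t2 - t1) * ln 2" and B: "e2 - e1 = e2 * (1 - 2 powr (-(t2 - t1)))"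
    by (simp_all add: algebra_simps)
  have "e2 * (1 - 2 powr (-(t2 - t1))) \<le> e2 * ((t2 - t1) * ln 2)" using A e2p by (intro mult_left_mono) auto
  hence "e2 - e1 \<le> e2 * ((t2 - t1) * ln 2)" using B by simp
  hence "k * (e2 - e1) \<le> k * (e2 * ((t2 - t1) * ln 2))" using assms by (simp add: mult_left_mono)
  also have "\<dots> = ((t2 - a) * k * ln 2 * e2) * ((t2 - t1) / (t2 - a))" using assms by (simp add: field_simps)
  also have "\<dots> \<le> (t2 - t1) / (t2 - a)" using assms e2_def
    by (intro mult_left_le_one_le) auto
  also have "\<dots> = 1 - (t1 - a) / (t2 - a)" using assms by (simp add: field_simps)
  also have "\<dots> < - ln ((t1 - a) / (t2 - a))"
    using ln_lt_minus_one[of "(t1 - a) / (t2 - a)"] assms by (simp add: field_simps)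
  also have "\<dots> = ln (t2 - a) - ln (t1 - a)" using assms by (simp add: ln_div)
  finally have key: "ln (t1 - a) - k * (e1 - 1) < ln (t2 - a) - k * (e2 - 1)" by (simp add: algebra_simps)
  have "(t1 - a) * exp (- k * (e1 - 1)) = exp (ln (t1 - a) - k * (e1 - 1))" using assms by (simp only: diff_conv_add_uminus exp_add exp_ln mult_minus_left) (simp?)
  also have "\<dots> < exp (ln (t2 - a) - k * (e2 - 1))" using key by simp
  also have "\<dots> = (t2 - a) * exp (- k * (e2 - 1))" using assms by (simp only: diff_conv_add_uminus exp_add exp_ln mult_minus_left) (simp?)
  finally show ?thesis unfolding e1_def e2_def .
qed


lemma decr:
  fixes a k t1 t2 :: real
  assumes "a < t1" "t1 < t2" "k > 0" "(t1 - a) * k * ln 2 * 2 powr t1 \<ge> 1"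
  shows "(t2 - a) * exp (- k * (2 powr t2 - 1)) < (t1 - a) * exp (- k * (2 powr t1 - 1))"
proof -
  define e1 e2 where "e1 = 2 powr t1" and "e2 = (2::real) powr t2"
  have e1p: "e1 > 0" unfolding e1_def by simp
  have "e2 = e1 * 2 powr (t2 - t1)" unfolding e1_def e2_def by (simp add: powr_add[symmetric])
  moreover have "1 + (t2 - t1) * ln 2 \<le> 2 powr (t2 - t1)" using two_powr_ge[of "t2-t1"] by simp
  ultimately have A: "(t2 - t1) * ln 2 \<le> 2 powr (t2 - t1) - 1" and B: "e2 - e1 = e1 * (2 powr (t2 - t1) - 1)"
    by (simp_all add: algebra_simps)
  have "e1 * ((t2 - t1) * ln 2) \<le> e1 * (2 powr (t2 - t1) - 1)" using A e1p by (intro mult_left_mono) auto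
  hence "e1 * ((t2 - t1) * ln 2) \<le> e2 - e1" using B by simp
  hence "k * (e1 * ((t2 - t1) * ln 2)) \<le> k * (e2 - e1)" using assms by (simp add: mult_left_mono)
  moreover have "k * (e1 * ((t2 - t1) * ln 2)) = ((t1 - a) * k * ln 2 * e1) * ((t2 - t1) / (t1 - a))" using assms by (simp add: field_simps)
  moreover have "((t1 - a) * k * ln 2 * e1) * ((t2 - t1) / (t1 - a)) \<ge> (t2 - t1) / (t1 - a)" using mult_right_mono[of 1 "(t1 - a) * k * ln 2 * e1" "(t2 - t1) / (t1 - a)"] assms e1_def by auto
  moreover have "(t2 - t1) / (t1 - a) = (t2 - a) / (t1 - a) - 1" using assms by (simp add: field_simps)
  moreover have "ln ((t2 - a) / (t1 - a)) < (t2 - a) / (t1 - a) - 1"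
    using ln_lt_minus_one[of "(t2 - a) / (t1 - a)"] assms by (simp add: field_simps)
  moreover have "ln ((t2 - a) / (t1 - a)) = ln (t2 - a) - ln (t1 - a)" using assms by (simp add: ln_div)
  ultimately have key: "ln (t2 - a) - k * (e2 - 1) < ln (t1 - a) - k * (e1 - 1)" by (simp add: algebra_simps)
  have "(t2 - a) * exp (- k * (e2 - 1)) = exp (ln (t2 - a) - k * (e2 - 1))" using assms by (simp only: diff_conv_add_uminus exp_add exp_ln mult_minus_left) (simp?)
  also have "\<dots> < exp (ln (t1 - a) - k * (e1 - 1))" using key by simp
  also have "\<dots> = (t1 - a) * exp (- k * (e1 - 1))" using assms by (simp only: diff_conv_add_uminus exp_add exp_ln mult_minus_left) (simp?)
  finally show ?thesis unfolding e1_def e2_def .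
qed



theorem theorem2:
  fixes N :: nat and L \<alpha> p lam_e \<epsilon> :: real
  assumes "N \<ge> 1" and "L > 0" and "\<alpha> > 0" and "p > 0" and "lam_e > 0"
    and "0 < \<epsilon>" and "\<epsilon> < 1"
  defines "K1 \<equiv> pi * lam_e * Gamma (2 / \<alpha> + 1)"
    and "K2 \<equiv> ((L / real N) powr \<alpha> + 1) / p"
  defines "Res \<equiv> log 2 (2 * p / \<alpha> *
              lambertW0 (\<alpha> / 2 * (ln (1 / (1 - \<epsilon>)) / (real N * K1)) powr (- \<alpha> / 2)) + 1)"
  defines "U \<equiv> (\<lambda>Rt. (Rt - Res) * exp (- K2 * (2 powr Rt - 1)) / real N)"
    and "Rts \<equiv> Res + lambertW0 (2 powr (- Res) / K2) / ln 2"
    and "Rss \<equiv> lambertW0 (2 powr (- Res) / K2) / ln 2"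
  shows
    "(\<forall>Rt Rs. Rs \<le> Rt \<and> 0 < Rs \<longrightarrow>
        (sec_outage N K1 \<alpha> p Rt Rs \<le> \<epsilon> \<longleftrightarrow> Rt - Rs \<ge> Res) \<and>
        (sec_outage N K1 \<alpha> p Rt Rs = \<epsilon> \<longleftrightarrow> Rt - Rs = Res))
     \<and> quasiconcave_on {Res<..} U
     \<and> Res < Rts \<and> (\<forall>Rt. Res < Rt \<and> Rt \<noteq> Rts \<longrightarrow> U Rt < U Rts)
     \<and> Rss \<le> Rts \<and> 0 < Rss \<and> sec_outage N K1 \<alpha> p Rts Rss \<le> \<epsilon>
     \<and> (\<forall>Rt Rs. Rs \<le> Rt \<and> 0 < Rs \<and> sec_outage N K1 \<alpha> p Rt Rs \<le> \<epsilon> \<longrightarrow>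
           oft_throughput N L \<alpha> p Rt Rs \<le> oft_throughput N L \<alpha> p Rts Rss)"
proof -
  have N0: "real N > 0" using assms(1) by simp
  have "0 < 2 / \<alpha> + 1" using assms(3) by (simp add: add_pos_nonneg)
  hence "Gamma (2 / \<alpha> + 1) > 0" by (rule Gamma_real_pos)
  hence K1p: "K1 > 0" unfolding K1_def using assms(5) by simp
  have K2p: "K2 > 0" unfolding K2_def using assms(1-7) by (simp add: add_pos_nonneg)
  define c where "c = ln (1 / (1 - \<epsilon>))"
  have cp: "c > 0" unfolding c_def using assms(1-7) by simp
  have ec: "exp (- c) = 1 - \<epsilon>" unfolding c_def using assms(1-7) by (simp add: exp_minus)
  define d where "d = c / (real N * K1)"
  have dp: "d > 0" unfolding d_def using cp N0 K1p by simp
  define z where "z = \<alpha> / 2 * d powr (- \<alpha> / 2)"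
  have zp: "z > 0" unfolding z_def using dp assms(1-7) by simp
  define w where "w = lambertW0 z"
  have wp: "w > 0" and wz: "w * exp w = z" using W0_pos[OF zp] unfolding w_def by auto
  define bs where "bs = 2 * p / \<alpha> * w"
  have bsp: "bs > 0" unfolding bs_def using wp assms(1-7) by simp
  have Res_eq: "Res = log 2 (bs + 1)" unfolding Res_def bs_def w_def z_def d_def c_def by simp
  have Resp: "Res > 0" using Res_eq bsp by simp
  have pRes: "2 powr Res = bs + 1" using Res_eq bsp by simp
  define G where "G b = real N * K1 * (b / p) powr (- 2 / \<alpha>) * exp (- b / p)" for b
  have Gbs: "G bs = c"
  proof -
    have b1: "bs / p = 2 * w / \<alpha>" unfolding bs_def using assms(1-7) by simp
    have "(2 * w / \<alpha>) * exp w = d powr (- \<alpha> / 2)" using wz unfolding z_def using assms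
      by (simp add: field_simps)
    hence "((2 * w / \<alpha>) * exp w) powr (- 2 / \<alpha>) = (d powr (- \<alpha> / 2)) powr (- 2 / \<alpha>)" by simp
    also have "\<dots> = d" using assms(1-7) dp by (simp add: powr_powr)
    also have "((2 * w / \<alpha>) * exp w) powr (- 2 / \<alpha>) = (2 * w / \<alpha>) powr (- 2 / \<alpha>) * exp (- 2 * w / \<alpha>)"
    proof -
      have "((2 * w / \<alpha>) * exp w) powr (- 2 / \<alpha>) = (2 * w / \<alpha>) powr (- 2 / \<alpha>) * exp w powr (- 2 / \<alpha>)"
        using wp assms(3) powr_mult[of "2 * w / \<alpha>" "exp w" "- 2 / \<alpha>"] by simp
      moreover have "exp w powr (- 2 / \<alpha>) = exp (- 2 * w / \<alpha>)" by (simp add: powr_def)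
      ultimately show ?thesis by simp
    qed
    finally have "(2 * w / \<alpha>) powr (- 2 / \<alpha>) * exp (- (2 * w / \<alpha>)) = d" by simp
    moreover have "- bs / p = - (2 * w / \<alpha>)" using b1 by simp
    ultimately show ?thesis unfolding G_def b1 d_def using N0 K1p by (simp add: field_simps)
  qed
  have Gdec: "G b2 < G b1" if "0 < b1" "b1 < b2" for b1 b2
  proof -
    have "(b2 / p) powr (- 2 / \<alpha>) < (b1 / p) powr (- 2 / \<alpha>)"
      using that assms(1-7) by (intro powr_less_mono2_neg) (auto simp: divide_strict_right_mono)
    moreover have "exp (- b2 / p) < exp (- b1 / p)" using that assms(1-7) by (simp add: divide_strict_right_mono)
    ultimately have "(b2 / p) powr (- 2 / \<alpha>) * exp (- b2 / p) < (b1 / p) powr (- 2 / \<alpha>) * exp (- b1 / p)"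
      using that assms(1-7) by (intro mult_strict_mono) auto
    thus ?thesis unfolding G_def using N0 K1p by simp
  qed
  have so: "sec_outage N K1 \<alpha> p Rt Rs = (if 2 powr (Rt - Rs) - 1 \<le> 0 then 1 else 1 - exp (- G (2 powr (Rt - Rs) - 1)))" for Rt Rs
    unfolding sec_outage_def G_def Let_def by simp
  have le_iff: "1 - exp (- G b) \<le> \<epsilon> \<longleftrightarrow> G b \<le> c" for b
  proof -
    have "1 - exp (- G b) \<le> \<epsilon> \<longleftrightarrow> exp (- c) \<le> exp (- G b)" using ec by linarith
    also have "\<dots> \<longleftrightarrow> G b \<le> c" by simp
    finally show ?thesis .
  qed
  have eq_iff: "1 - exp (- G b) = \<epsilon> \<longleftrightarrow> G b = c" for b
  proof -
    have "1 - exp (- G b) = \<epsilon> \<longleftrightarrow> exp (- c) = exp (- G b)" using ec by linarith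
    also have "\<dots> \<longleftrightarrow> G b = c" by auto
    finally show ?thesis .
  qed
  have G_le: "G b \<le> c \<longleftrightarrow> bs \<le> b" if "b > 0" for b
    using Gdec[of b bs] Gdec[of bs b] Gbs that bsp by (cases "b < bs"; cases "b = bs") auto
  have G_eq: "G b = c \<longleftrightarrow> b = bs" if "b > 0" for b
    using Gdec[of b bs] Gdec[of bs b] Gbs that bsp by (cases "b < bs"; cases "b = bs") auto
  have P1: "(sec_outage N K1 \<alpha> p Rt Rs \<le> \<epsilon> \<longleftrightarrow> Rt - Rs \<ge> Res) \<and>
        (sec_outage N K1 \<alpha> p Rt Rs = \<epsilon> \<longleftrightarrow> Rt - Rs = Res)" if "Rs \<le> Rt" for Rt Rs
  proof (cases "Rt - Rs = 0")
    case True
    thus ?thesis unfolding so using True Resp assms(1-7) by simp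
  next
    case False
    hence D: "Rt - Rs > 0" using that by simp
    have "2 powr 0 < 2 powr (Rt - Rs)" using D by (intro powr_less_mono) auto
    hence bp: "2 powr (Rt - Rs) - 1 > 0" by simp
    have i1: "bs \<le> 2 powr (Rt - Rs) - 1 \<longleftrightarrow> Res \<le> Rt - Rs"
      using pRes powr_le_cancel_iff[of 2 Res "Rt - Rs"] by (simp add: algebra_simps)
    have i2: "2 powr (Rt - Rs) - 1 = bs \<longleftrightarrow> Rt - Rs = Res"
      using pRes powr_inj[of 2 Res "Rt - Rs"] by auto
    show ?thesis unfolding so using bp le_iff eq_iff G_le[OF bp] G_eq[OF bp] i1 i2 by auto
  qed
  define q where "q = 2 powr (- Res) / K2"
  have qp: "q > 0" unfolding q_def using K2p by simp
  define v where "v = lambertW0 q"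
  have vp: "v > 0" and vq: "v * exp v = q" using W0_pos[OF qp] unfolding v_def by auto
  have Rts_eq: "Rts = Res + v / ln 2" unfolding Rts_def v_def q_def ..
  have Rss_eq: "Rss = v / ln 2" unfolding Rss_def v_def q_def ..
  have l2: "ln (2::real) > 0" by simp
  have RtsR: "Res < Rts" using Rts_eq vp l2 by simp
  define h where "h t = ((t - Res) * (K2 * ln 2)) * 2 powr t" for t
  have hR: "h Rts = 1"
  proof -
    have "2 powr Rts = 2 powr Res * 2 powr (v / ln 2)" unfolding Rts_eq by (simp add: powr_add)
    also have "2 powr (v / ln 2) = exp v" using l2 by (simp add: powr_def)
    finally have e: "2 powr Rts = 2 powr Res * exp v" .
    have d: "Rts - Res = v / ln 2" using Rts_eq by simp
    have "h Rts = ((Rts - Res) * (K2 * ln 2)) * 2 powr Rts" unfolding h_def ..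
    also have "\<dots> = (v * exp v) * K2 * 2 powr Res" unfolding d e using l2 by (simp add: field_simps)
    finally have "h Rts = (v * exp v) * K2 * 2 powr Res" .
    also have "\<dots> = 1" unfolding vq q_def using K2p by (simp add: powr_minus field_simps)
    finally show ?thesis .
  qed
  have hmono: "h t1 \<le> h t2" if "Res \<le> t1" "t1 \<le> t2" for t1 t2
    unfolding h_def using that K2p l2
    by (intro mult_mono) (auto intro!: mult_right_mono)
  define \<phi> where "\<phi> t = (t - Res) * exp (- K2 * (2 powr t - 1))" for t
  have U_eq: "U t = \<phi> t / real N" for t unfolding U_def \<phi>_def ..
  have inc: "\<phi> t1 < \<phi> t2" if "Res < t1" "t1 < t2" "t2 \<le> Rts" for t1 t2
  proof -
    have "h t2 \<le> 1" using hmono[of t2 Rts] that hR by simp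
    hence "(t2 - Res) * K2 * ln 2 * 2 powr t2 \<le> 1" unfolding h_def by (simp add: mult.assoc)
    thus ?thesis unfolding \<phi>_def using incr[of Res t1 t2 K2] that K2p by simp
  qed
  have dec: "\<phi> t2 < \<phi> t1" if "Rts \<le> t1" "t1 < t2" for t1 t2
  proof -
    have "h t1 \<ge> 1" using hmono[of Rts t1] that hR RtsR by simp
    hence "(t1 - Res) * K2 * ln 2 * 2 powr t1 \<ge> 1" unfolding h_def by (simp add: mult.assoc)
    thus ?thesis unfolding \<phi>_def using decr[of Res t1 t2 K2] that K2p RtsR by simp
  qed
  have Umax: "U t < U Rts" if "Res < t" "t \<noteq> Rts" for t
  proof -
    have "\<phi> t < \<phi> Rts"
    proof (cases "t < Rts")
      case True thus ?thesis using inc[of t Rts] that by simp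
    next
      case False thus ?thesis using dec[of Rts t] that by simp
    qed
    thus ?thesis unfolding U_eq using N0 by (simp add: divide_strict_right_mono)
  qed
  have between: "\<phi> m \<le> \<phi> z \<or> \<phi> M \<le> \<phi> z" if "Res < m" "m \<le> z" "z \<le> M" for m z M
  proof (cases "z \<le> Rts")
    case True
    thus ?thesis using inc[of m z] that by (cases "m = z") auto
  next
    case False
    thus ?thesis using dec[of z M] that by (cases "z = M") auto
  qed
  have QC: "quasiconcave_on {Res<..} U"
    unfolding quasiconcave_on_def
  proof (intro conjI ballI allI impI)
    show "convex {Res<..}" by (rule convex_real_interval)
    fix x y t :: real assume x: "x \<in> {Res<..}" and y: "y \<in> {Res<..}" and t: "0 \<le> t \<and> t \<le> 1"
    define z where "z = t * x + (1 - t) * y"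
    have a1: "t * min x y \<le> t * x" "(1 - t) * min x y \<le> (1 - t) * y"
      using t by (auto intro!: mult_left_mono)
    have a2: "t * x \<le> t * max x y" "(1 - t) * y \<le> (1 - t) * max x y"
      using t by (auto intro!: mult_left_mono)
    have "t * min x y + (1 - t) * min x y = min x y" "t * max x y + (1 - t) * max x y = max x y"
      by (simp_all add: algebra_simps)
    hence zb: "min x y \<le> z" "z \<le> max x y" using a1 a2 unfolding z_def by linarith+
    have "\<phi> (min x y) \<le> \<phi> z \<or> \<phi> (max x y) \<le> \<phi> z" using between[OF _ zb] x y by simp
    hence "\<phi> x \<le> \<phi> z \<or> \<phi> y \<le> \<phi> z" by (cases "x \<le> y") (auto simp: min_def max_def)
    hence "U x \<le> U z \<or> U y \<le> U z" unfolding U_eq using N0 by (auto intro: divide_right_mono)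
    thus "min (U x) (U y) \<le> U (t * x + (1 - t) * y)" unfolding z_def by auto
  qed
  have RssRts: "Rss \<le> Rts" using Rss_eq Rts_eq Resp by simp
  have Rssp: "0 < Rss" using Rss_eq vp l2 by simp
  have soR: "sec_outage N K1 \<alpha> p Rts Rss \<le> \<epsilon>" using P1[OF RssRts] Rss_eq Rts_eq by simp
  have tx: "oft_tx_prob N L \<alpha> p Rt = exp (- K2 * (2 powr Rt - 1))" for Rt
    unfolding oft_tx_prob_def K2_def using assms(4) by (simp add: field_simps)
  have opt: "oft_throughput N L \<alpha> p Rt Rs \<le> oft_throughput N L \<alpha> p Rts Rss"
    if "Rs \<le> Rt" "0 < Rs" "sec_outage N K1 \<alpha> p Rt Rs \<le> \<epsilon>" for Rt Rs
  proof -
    have D: "Res \<le> Rt - Rs" using P1[OF that(1)] that(3) by simp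
    have "oft_throughput N L \<alpha> p Rt Rs = exp (- K2 * (2 powr Rt - 1)) * Rs / real N"
      unfolding oft_throughput_def tx ..
    also have "\<dots> \<le> exp (- K2 * (2 powr Rt - 1)) * (Rt - Res) / real N"
      using D N0 by (intro divide_right_mono mult_left_mono) auto
    also have "\<dots> = U Rt" unfolding U_def by (simp add: mult.commute)
    also have "\<dots> \<le> U Rts" using Umax[of Rt] D that(2) by (cases "Rt = Rts") auto
    also have "\<dots> = oft_throughput N L \<alpha> p Rts Rss"
      unfolding U_def oft_throughput_def tx using Rts_eq Rss_eq by (simp add: mult.commute)
    finally show ?thesis .
  qed
  show ?thesis using P1 QC RtsR Umax RssRts Rssp soR opt by blast
qed

end
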